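(* Fix a TxnSP instance. Every representable subschedule is prime.
   Context: TxnSP instance: jobs $J=\{1,\dots,n\}$, identical machines $1,\dots,m$, lengths $L_\alpha>0$, symmetric binary conflict matrix $C$ with zero diagonal ($C_{\alpha\beta}=1$ iff $\alpha\neq\beta$ conflict). Insertion process: Start from some state, where each machine $\mu$ has a processing time $P_\mu$ (initially $0$ when empty). An instruction $(\alpha,\mu)$ appends a not-yet-placed job $\alpha$ at the end of machine $\mu$. It assigns $\alpha$ the start time $st(\alpha)$, defined as the least $t\ge P_\mu$ such that $[t,t+L_\alpha)$ is disjoint from $[st(\beta),ct(\beta))$ for every already placed job $\beta$ with $C_{\alpha\beta}=1$. It then sets the completion time $ct(\alpha)=st(\alpha)+L_\alpha$ and updates $P_\mu:=ct(\alpha)$. A subschedule formed by $S\subseteq J$ is the result of applying, from the empty state, a list of instructions whose jobs are exactly $S$. Its size is $|S|$, and its makespan $ms$ is $\max_\mu P_\mu$. A subschedule $j$ is derived from $i$ (and $i$ is a root of $j$) if there is an instruction list producing $i$ and a further list whose application after it produces $j$. $LJ_i$ is the set of last jobs on the nonempty machines of $i$. A subschedule $i$ is reducible by $\alpha\in LJ_i$ if removing $\alpha$ from the end of its machine and appending it to a different machine (with start time given by the insertion rule relative to the remaining jobs) yields a strictly smaller makespan. $i$ is non-reducible if it is reducible by no $\alpha\in LJ_i$. A non-reducible subschedule $i$ of size $c$ is prime if for every $d<c$ it has at least one non-reducible root of size $d$. Derivation rule: given a sequence $(\alpha_1,\dots,\alpha_c)$ of distinct jobs, insert them in this order, each into a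 machine with currently smallest processing time $P_\mu$, breaking ties by smallest machine index. A subschedule is representable if it is obtained by applying the derivation rule to some sequence of distinct jobs (a permutation of the subset forming it). *)

theory Defs
  imports Main "HOL.Real"
begin

text \<open>TxnSP instance: jobs J = {1..n}, machines {1..m}, lengths L, conflict relation C.
A (sub)schedule state records, for each machine, the list of jobs on it in order,
and the start time of every placed job (unplaced jobs keep the default value 0).\<close>

record sched =
  seqs :: "nat \<Rightarrow> nat list"
  st :: "nat \<Rightarrow> real"

definition empty_sched :: sched where
  "empty_sched = \<lparr>seqs = (\<lambda>_. []), st = (\<lambda>_. 0)\<rparr>"

definition placed :: "sched \<Rightarrow> nat set" where
  "placed s = (\<Union>\<mu>. set (seqs s \<mu>))"

definition ct :: "(nat \<Rightarrow> real) \<Rightarrow> sched \<Rightarrow> nat \<Rightarrow> real" where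
  "ct L s \<beta> = st s \<beta> + L \<beta>"

definition proc :: "(nat \<Rightarrow> real) \<Rightarrow> sched \<Rightarrow> nat \<Rightarrow> real" where
  "proc L s \<mu> = (if seqs s \<mu> = [] then 0 else ct L s (last (seqs s \<mu>)))"

definition ins_start :: "(nat \<Rightarrow> real) \<Rightarrow> (nat \<Rightarrow> nat \<Rightarrow> bool) \<Rightarrow> sched \<Rightarrow> nat \<Rightarrow> nat \<Rightarrow> real" where
  "ins_start L C s \<alpha> \<mu> = (LEAST t::real. proc L s \<mu> \<le> t \<and>
      (\<forall>\<beta>\<in>placed s. C \<alpha> \<beta> \<longrightarrow> {t..<t + L \<alpha>} \<inter> {st s \<beta>..<ct L s \<beta>} = {}))"

definition ins :: "(nat \<Rightarrow> real) \<Rightarrow> (nat \<Rightarrow> nat \<Rightarrow> bool) \<Rightarrow> sched \<Rightarrow> nat \<Rightarrow> nat \<Rightarrow> sched" where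
  "ins L C s \<alpha> \<mu> = \<lparr>seqs = (seqs s)(\<mu> := seqs s \<mu> @ [\<alpha>]),
                      st = (st s)(\<alpha> := ins_start L C s \<alpha> \<mu>)\<rparr>"

fun run :: "(nat \<Rightarrow> real) \<Rightarrow> (nat \<Rightarrow> nat \<Rightarrow> bool) \<Rightarrow> sched \<Rightarrow> (nat \<times> nat) list \<Rightarrow> sched" where
  "run L C s [] = s"
| "run L C s ((\<alpha>, \<mu>) # xs) = run L C (ins L C s \<alpha> \<mu>) xs"

fun valid :: "nat \<Rightarrow> nat \<Rightarrow> (nat \<Rightarrow> real) \<Rightarrow> (nat \<Rightarrow> nat \<Rightarrow> bool) \<Rightarrow> sched \<Rightarrow> (nat \<times> nat) list \<Rightarrow> bool" where
  "valid n m L C s [] = True"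
| "valid n m L C s ((\<alpha>, \<mu>) # xs) =
     (\<alpha> \<in> {1..n} \<and> \<alpha> \<notin> placed s \<and> \<mu> \<in> {1..m} \<and> valid n m L C (ins L C s \<alpha> \<mu>) xs)"

definition subsched :: "nat \<Rightarrow> nat \<Rightarrow> (nat \<Rightarrow> real) \<Rightarrow> (nat \<Rightarrow> nat \<Rightarrow> bool) \<Rightarrow> sched \<Rightarrow> bool" where
  "subsched n m L C s \<longleftrightarrow> (\<exists>xs. valid n m L C empty_sched xs \<and> s = run L C empty_sched xs)"

definition size_s :: "sched \<Rightarrow> nat" where
  "size_s s = card (placed s)"

definition ms :: "nat \<Rightarrow> (nat \<Rightarrow> real) \<Rightarrow> sched \<Rightarrow> real" where
  "ms m L s = Max (proc L s ` {1..m})"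

definition derived :: "nat \<Rightarrow> nat \<Rightarrow> (nat \<Rightarrow> real) \<Rightarrow> (nat \<Rightarrow> nat \<Rightarrow> bool) \<Rightarrow> sched \<Rightarrow> sched \<Rightarrow> bool" where
  "derived n m L C i j \<longleftrightarrow> subsched n m L C i \<and> (\<exists>ys. valid n m L C i ys \<and> j = run L C i ys)"

definition last_jobs :: "nat \<Rightarrow> sched \<Rightarrow> nat set" where
  "last_jobs m s = {last (seqs s \<mu>) | \<mu>. \<mu> \<in> {1..m} \<and> seqs s \<mu> \<noteq> []}"

definition remove_last :: "sched \<Rightarrow> nat \<Rightarrow> sched" where
  "remove_last s \<mu> = s\<lparr>seqs := (seqs s)(\<mu> := butlast (seqs s \<mu>))\<rparr>"

definition reducible_by :: "nat \<Rightarrow> (nat \<Rightarrow> real) \<Rightarrow> (nat \<Rightarrow> nat \<Rightarrow> bool) \<Rightarrow> sched \<Rightarrow> nat \<Rightarrow> bool" where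
  "reducible_by m L C s \<alpha> \<longleftrightarrow> (\<exists>\<mu>0 \<mu>. \<mu>0 \<in> {1..m} \<and> seqs s \<mu>0 \<noteq> [] \<and> last (seqs s \<mu>0) = \<alpha> \<and>
      \<mu> \<in> {1..m} \<and> \<mu> \<noteq> \<mu>0 \<and> ms m L (ins L C (remove_last s \<mu>0) \<alpha> \<mu>) < ms m L s)"

definition non_reducible :: "nat \<Rightarrow> (nat \<Rightarrow> real) \<Rightarrow> (nat \<Rightarrow> nat \<Rightarrow> bool) \<Rightarrow> sched \<Rightarrow> bool" where
  "non_reducible m L C s \<longleftrightarrow> (\<forall>\<alpha>\<in>last_jobs m s. \<not> reducible_by m L C s \<alpha>)"

definition prime_sched :: "nat \<Rightarrow> nat \<Rightarrow> (nat \<Rightarrow> real) \<Rightarrow> (nat \<Rightarrow> nat \<Rightarrow> bool) \<Rightarrow> sched \<Rightarrow> bool" where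
  "prime_sched n m L C s \<longleftrightarrow> non_reducible m L C s \<and>
     (\<forall>d < size_s s. \<exists>r. derived n m L C r s \<and> size_s r = d \<and> non_reducible m L C r)"

definition min_machine :: "nat \<Rightarrow> (nat \<Rightarrow> real) \<Rightarrow> sched \<Rightarrow> nat" where
  "min_machine m L s = (LEAST \<mu>. \<mu> \<in> {1..m} \<and> (\<forall>\<nu>\<in>{1..m}. proc L s \<mu> \<le> proc L s \<nu>))"

fun derive_run :: "nat \<Rightarrow> (nat \<Rightarrow> real) \<Rightarrow> (nat \<Rightarrow> nat \<Rightarrow> bool) \<Rightarrow> sched \<Rightarrow> nat list \<Rightarrow> sched" where
  "derive_run m L C s [] = s"
| "derive_run m L C s (\<alpha> # as) = derive_run m L C (ins L C s \<alpha> (min_machine m L s)) as"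

definition representable :: "nat \<Rightarrow> nat \<Rightarrow> (nat \<Rightarrow> real) \<Rightarrow> (nat \<Rightarrow> nat \<Rightarrow> bool) \<Rightarrow> sched \<Rightarrow> bool" where
  "representable n m L C s \<longleftrightarrow>
     (\<exists>as. distinct as \<and> set as \<subseteq> {1..n} \<and> s = derive_run m L C empty_sched as)"

end

theory Submission
  imports Defs "HOL-Analysis.Analysis"
begin

lemma ivl_disj_iff:
  fixes t a x y :: real
  shows "{t..<t+a} \<inter> {x..<y} = {} \<longleftrightarrow> (a \<le> 0 \<or> y \<le> x \<or> y \<le> t \<or> t + a \<le> x)"
proof
  assume h: "{t..<t+a} \<inter> {x..<y} = {}"
  show "a \<le> 0 \<or> y \<le> x \<or> y \<le> t \<or> t + a \<le> x"
  proof (rule ccontr)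
    assume "\<not> ?thesis"
    then have "max t x \<in> {t..<t+a} \<inter> {x..<y}" by auto
    with h show False by blast
  qed
next
  assume "a \<le> 0 \<or> y \<le> x \<or> y \<le> t \<or> t + a \<le> x"
  then show "{t..<t+a} \<inter> {x..<y} = {}" by auto
qed

lemma disj_closed: "closed {t::real. {t..<t+a} \<inter> {x..<y} = {}}"
proof -
  have "{t::real. {t..<t+a} \<inter> {x..<y} = {}} = (if a \<le> 0 \<or> y \<le> x then UNIV else {y..} \<union> {..x-a})"
    by (auto simp: ivl_disj_iff)
  then show ?thesis by (simp add: closed_Un)
qed

lemma least_closed:
  fixes S :: "real set"
  assumes "closed S" "S \<noteq> {}" "bdd_below S"
  shows "(LEAST t. t \<in> S) \<in> S \<and> (\<forall>t\<in>S. (LEAST t. t \<in> S) \<le> t)"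
proof -
  have i: "Inf S \<in> S" using closed_contains_Inf assms by blast
  have l: "\<forall>t\<in>S. Inf S \<le> t" using assms(3) by (simp add: cInf_lower)
  have "(LEAST t. t \<in> S) = Inf S"
    by (rule Least_equality) (use i l in auto)
  then show ?thesis using i l by simp
qed

lemma ins_start_spec:
  assumes fin: "finite (placed s)"
  shows "proc L s \<mu> \<le> ins_start L C s \<alpha> \<mu> \<and> (\<forall>\<beta>\<in>placed s. C \<alpha> \<beta> \<longrightarrow>
           {ins_start L C s \<alpha> \<mu>..<ins_start L C s \<alpha> \<mu> + L \<alpha>} \<inter> {st s \<beta>..<ct L s \<beta>} = {})"
    and "proc L s \<mu> \<le> t \<Longrightarrow> \<forall>\<beta>\<in>placed s. C \<alpha> \<beta> \<longrightarrow> {t..<t+L \<alpha>} \<inter> {st s \<beta>..<ct L s \<beta>} = {}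
          \<Longrightarrow> ins_start L C s \<alpha> \<mu> \<le> t"
proof -
  define S where "S = {t. proc L s \<mu> \<le> t \<and>
      (\<forall>\<beta>\<in>placed s. C \<alpha> \<beta> \<longrightarrow> {t..<t + L \<alpha>} \<inter> {st s \<beta>..<ct L s \<beta>} = {})}"
  have eq: "ins_start L C s \<alpha> \<mu> = (LEAST t. t \<in> S)" unfolding ins_start_def S_def by simp
  have "S = {t. proc L s \<mu> \<le> t} \<inter> (\<Inter>\<beta>\<in>{\<beta>\<in>placed s. C \<alpha> \<beta>}. {t. {t..<t + L \<alpha>} \<inter> {st s \<beta>..<ct L s \<beta>} = {}})"
    unfolding S_def by blast
  moreover have "closed {t. proc L s \<mu> \<le> t}"
    using closed_atLeast[of "proc L s \<mu>"] by (simp add: atLeast_def)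
  moreover have "closed (\<Inter>\<beta>\<in>{\<beta>\<in>placed s. C \<alpha> \<beta>}. {t. {t..<t + L \<alpha>} \<inter> {st s \<beta>..<ct L s \<beta>} = {}})"
    by (rule closed_INT) (intro ballI disj_closed)
  ultimately have cl: "closed S" by (simp add: closed_Int)
  define t0 where "t0 = max (proc L s \<mu>) (Max (insert 0 (ct L s ` placed s)))"
  have "t0 \<in> S" unfolding S_def
  proof (intro CollectI conjI ballI impI)
    show "proc L s \<mu> \<le> t0" unfolding t0_def by simp
    fix \<beta> assume b: "\<beta> \<in> placed s"
    have "ct L s \<beta> \<le> Max (insert 0 (ct L s ` placed s))" using fin b by simp
    then have "ct L s \<beta> \<le> t0" unfolding t0_def by linarith
    then show "{t0..<t0 + L \<alpha>} \<inter> {st s \<beta>..<ct L s \<beta>} = {}" by (simp add: ivl_disj_iff)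
  qed
  then have ne: "S \<noteq> {}" by blast
  have bb: "bdd_below S" unfolding S_def by (rule bdd_belowI[of _ "proc L s \<mu>"]) auto
  have mem: "ins_start L C s \<alpha> \<mu> \<in> S" and lst: "\<forall>t\<in>S. ins_start L C s \<alpha> \<mu> \<le> t"
    using least_closed[OF cl ne bb] unfolding eq by auto
  from mem show "proc L s \<mu> \<le> ins_start L C s \<alpha> \<mu> \<and> (\<forall>\<beta>\<in>placed s. C \<alpha> \<beta> \<longrightarrow>
           {ins_start L C s \<alpha> \<mu>..<ins_start L C s \<alpha> \<mu> + L \<alpha>} \<inter> {st s \<beta>..<ct L s \<beta>} = {})"
    unfolding S_def by (rule CollectD)
  assume "proc L s \<mu> \<le> t" "\<forall>\<beta>\<in>placed s. C \<alpha> \<beta> \<longrightarrow> {t..<t+L \<alpha>} \<inter> {st s \<beta>..<ct L s \<beta>} = {}"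
  then have "t \<in> S" unfolding S_def by (intro CollectI conjI)
  with lst show "ins_start L C s \<alpha> \<mu> \<le> t" by blast
qed

lemma placed_ins: "placed (ins L C s \<alpha> \<mu>) = insert \<alpha> (placed s)"
  unfolding placed_def ins_def by (auto split: if_splits)

lemma seqs_ins: "seqs (ins L C s \<alpha> \<mu>) = (seqs s)(\<mu> := seqs s \<mu> @ [\<alpha>])"
  by (simp add: ins_def)

lemma st_ins: "st (ins L C s \<alpha> \<mu>) = (st s)(\<alpha> := ins_start L C s \<alpha> \<mu>)"
  by (simp add: ins_def)

lemma placed_empty: "placed empty_sched = {}"
  by (simp add: placed_def empty_sched_def)

lemma last_placed: "seqs s \<nu> \<noteq> [] \<Longrightarrow> last (seqs s \<nu>) \<in> placed s"
  unfolding placed_def using last_in_set by blast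

lemma min_machine:
  assumes "m \<ge> 1"
  shows "min_machine m L s \<in> {1..m} \<and> (\<forall>\<nu>\<in>{1..m}. proc L s (min_machine m L s) \<le> proc L s \<nu>)"
proof -
  have "Min (proc L s ` {1..m}) \<in> proc L s ` {1..m}" using assms by (intro Min_in) auto
  then obtain \<mu> where mu: "\<mu> \<in> {1..m}" "proc L s \<mu> = Min (proc L s ` {1..m})" by auto
  then have "\<mu> \<in> {1..m} \<and> (\<forall>\<nu>\<in>{1..m}. proc L s \<mu> \<le> proc L s \<nu>)" by auto
  then show ?thesis unfolding min_machine_def by (rule LeastI)
qed

lemma proc_mono:
  assumes fin: "finite (placed s)" and np: "\<alpha> \<notin> placed s" and La: "L \<alpha> \<ge> 0"
  shows "proc L s \<nu> \<le> proc L (ins L C s \<alpha> \<mu>) \<nu>"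
proof (cases "\<nu> = \<mu>")
  case True
  have "proc L (ins L C s \<alpha> \<mu>) \<nu> = ins_start L C s \<alpha> \<mu> + L \<alpha>"
    using True by (simp add: proc_def seqs_ins ct_def st_ins)
  then show ?thesis using ins_start_spec(1)[OF fin, of L \<mu> C \<alpha>] La True by simp
next
  case False
  show ?thesis
  proof (cases "seqs s \<nu> = []")
    case True then show ?thesis using False by (simp add: proc_def seqs_ins)
  next
    case ne: False
    then have "last (seqs s \<nu>) \<noteq> \<alpha>" using last_placed np by metis
    then show ?thesis using False ne by (simp add: proc_def seqs_ins ct_def st_ins)
  qed
qed


definition INV :: "nat \<Rightarrow> nat \<Rightarrow> (nat \<Rightarrow> real) \<Rightarrow> (nat \<Rightarrow> nat \<Rightarrow> bool) \<Rightarrow> sched \<Rightarrow> bool" where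
  "INV n m L C s \<longleftrightarrow> finite (placed s) \<and> placed s \<subseteq> {1..n} \<and>
    (\<forall>\<nu>. seqs s \<nu> \<noteq> [] \<longrightarrow> (\<exists>s1. finite (placed s1) \<and> last (seqs s \<nu>) \<notin> placed s1 \<and>
       placed s1 \<subseteq> placed s \<and> (\<forall>\<beta>\<in>placed s1. st s \<beta> = st s1 \<beta>) \<and>
       (\<forall>\<mu>'\<in>{1..m}. proc L s1 \<nu> \<le> proc L s \<mu>') \<and>
       st s (last (seqs s \<nu>)) = ins_start L C s1 (last (seqs s \<nu>)) \<nu>))"

lemma INV_empty: "INV n m L C empty_sched"
  unfolding INV_def by (simp add: placed_empty, simp add: empty_sched_def)

lemma INV_step:
  assumes inv: "INV n m L C s" and m: "m \<ge> 1" and Lpos: "\<forall>\<alpha>\<in>{1..n}. L \<alpha> > 0"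
    and a: "a \<in> {1..n}" "a \<notin> placed s"
  shows "INV n m L C (ins L C s a (min_machine m L s))"
proof -
  define mu where "mu = min_machine m L s"
  define s' where "s' = ins L C s a mu"
  have fin: "finite (placed s)" and sub: "placed s \<subseteq> {1..n}" using inv by (auto simp: INV_def)
  have "L a > 0" using Lpos a(1) by blast
  then have La: "L a \<ge> 0" by simp
  have mono: "\<And>\<nu>. proc L s \<nu> \<le> proc L s' \<nu>"
    unfolding s'_def using fin a(2) La by (rule proc_mono)
  have mm: "mu \<in> {1..m} \<and> (\<forall>\<nu>\<in>{1..m}. proc L s mu \<le> proc L s \<nu>)"
    unfolding mu_def by (rule min_machine[OF m])
  have pl: "placed s' = insert a (placed s)" unfolding s'_def by (rule placed_ins)
  have sts: "\<And>\<beta>. \<beta> \<in> placed s \<Longrightarrow> st s' \<beta> = st s \<beta>"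
    using a(2) unfolding s'_def st_ins by auto
  have "\<forall>\<nu>. seqs s' \<nu> \<noteq> [] \<longrightarrow> (\<exists>s1. finite (placed s1) \<and> last (seqs s' \<nu>) \<notin> placed s1 \<and>
       placed s1 \<subseteq> placed s' \<and> (\<forall>\<beta>\<in>placed s1. st s' \<beta> = st s1 \<beta>) \<and>
       (\<forall>\<mu>'\<in>{1..m}. proc L s1 \<nu> \<le> proc L s' \<mu>') \<and>
       st s' (last (seqs s' \<nu>)) = ins_start L C s1 (last (seqs s' \<nu>)) \<nu>)"
  proof (intro allI impI)
    fix \<nu> assume ne: "seqs s' \<nu> \<noteq> []"
    show "\<exists>s1. finite (placed s1) \<and> last (seqs s' \<nu>) \<notin> placed s1 \<and>
       placed s1 \<subseteq> placed s' \<and> (\<forall>\<beta>\<in>placed s1. st s' \<beta> = st s1 \<beta>) \<and>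
       (\<forall>\<mu>'\<in>{1..m}. proc L s1 \<nu> \<le> proc L s' \<mu>') \<and>
       st s' (last (seqs s' \<nu>)) = ins_start L C s1 (last (seqs s' \<nu>)) \<nu>"
    proof (cases "\<nu> = mu")
      case True
      have l: "last (seqs s' \<nu>) = a" using True unfolding s'_def seqs_ins by simp
      have "\<forall>\<mu>'\<in>{1..m}. proc L s \<nu> \<le> proc L s' \<mu>'"
      proof
        fix \<mu>' assume "\<mu>' \<in> {1..m}"
        then have "proc L s \<nu> \<le> proc L s \<mu>'" using mm True by blast
        also have "\<dots> \<le> proc L s' \<mu>'" by (rule mono)
        finally show "proc L s \<nu> \<le> proc L s' \<mu>'" .
      qed
      moreover have "st s' a = ins_start L C s a \<nu>" using True unfolding s'_def st_ins by simp
      ultimately show ?thesis using l fin a(2) pl sts by (intro exI[of _ s]) auto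
    next
      case False
      then have sq: "seqs s' \<nu> = seqs s \<nu>" unfolding s'_def seqs_ins by simp
      with ne have ne0: "seqs s \<nu> \<noteq> []" by simp
      then obtain s1 where s1: "finite (placed s1)" "last (seqs s \<nu>) \<notin> placed s1"
        "placed s1 \<subseteq> placed s" "\<forall>\<beta>\<in>placed s1. st s \<beta> = st s1 \<beta>"
        "\<forall>\<mu>'\<in>{1..m}. proc L s1 \<nu> \<le> proc L s \<mu>'"
        "st s (last (seqs s \<nu>)) = ins_start L C s1 (last (seqs s \<nu>)) \<nu>"
        using inv unfolding INV_def by blast
      have lp: "last (seqs s \<nu>) \<in> placed s" using last_placed[OF ne0] .
      have A: "\<forall>\<mu>'\<in>{1..m}. proc L s1 \<nu> \<le> proc L s' \<mu>'"
      proof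
        fix \<mu>' assume "\<mu>' \<in> {1..m}"
        then have "proc L s1 \<nu> \<le> proc L s \<mu>'" using s1(5) by blast
        also have "\<dots> \<le> proc L s' \<mu>'" by (rule mono)
        finally show "proc L s1 \<nu> \<le> proc L s' \<mu>'" .
      qed
      have B: "st s' (last (seqs s' \<nu>)) = ins_start L C s1 (last (seqs s' \<nu>)) \<nu>"
        using sts[OF lp] s1(6) sq by simp
      have D: "\<forall>\<beta>\<in>placed s1. st s' \<beta> = st s1 \<beta>" using s1(3,4) sts by auto
      have E: "placed s1 \<subseteq> placed s'" using s1(3) pl by auto
      show ?thesis using A B D E s1(1,2) sq by (intro exI[of _ s1]) simp
    qed
  qed
  moreover have "finite (placed s')" using fin pl by simp
  moreover have "placed s' \<subseteq> {1..n}" using sub pl a by simp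
  ultimately have "INV n m L C s'" unfolding INV_def by blast
  then show ?thesis unfolding s'_def mu_def .
qed

lemma in_set_butlast_ne_last: "x \<in> set xs \<Longrightarrow> x \<noteq> last xs \<Longrightarrow> x \<in> set (butlast xs)"
  by (induction xs) (auto split: if_splits)

lemma placed_iff: "x \<in> placed s \<longleftrightarrow> (\<exists>\<nu>. x \<in> set (seqs s \<nu>))"
  by (simp add: placed_def)

lemma seqs_remove_last: "seqs (remove_last s \<mu>0) = (seqs s)(\<mu>0 := butlast (seqs s \<mu>0))"
  by (simp add: remove_last_def)

lemma placed_remove_last:
  assumes "seqs s \<mu>0 \<noteq> []"
  shows "placed s - {last (seqs s \<mu>0)} \<subseteq> placed (remove_last s \<mu>0)"
    and "placed (remove_last s \<mu>0) \<subseteq> placed s"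
proof -
  show "placed s - {last (seqs s \<mu>0)} \<subseteq> placed (remove_last s \<mu>0)"
  proof
    fix x assume "x \<in> placed s - {last (seqs s \<mu>0)}"
    then obtain \<nu> where x: "x \<in> set (seqs s \<nu>)" "x \<noteq> last (seqs s \<mu>0)" by (auto simp: placed_iff)
    show "x \<in> placed (remove_last s \<mu>0)"
    proof (cases "\<nu> = \<mu>0")
      case True
      then have "x \<in> set (butlast (seqs s \<mu>0))" using x in_set_butlast_ne_last by metis
      then have "x \<in> set (seqs (remove_last s \<mu>0) \<mu>0)" by (simp add: seqs_remove_last)
      then show ?thesis unfolding placed_iff by blast
    next
      case False
      then have "x \<in> set (seqs (remove_last s \<mu>0) \<nu>)" using x by (simp add: seqs_remove_last)
      then show ?thesis unfolding placed_iff by blast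
    qed
  qed
  show "placed (remove_last s \<mu>0) \<subseteq> placed s"
  proof
    fix x assume "x \<in> placed (remove_last s \<mu>0)"
    then obtain \<nu> where x: "x \<in> set (seqs (remove_last s \<mu>0) \<nu>)" unfolding placed_iff by blast
    have "x \<in> set (seqs s \<nu>)"
    proof (cases "\<nu> = \<mu>0")
      case True then show ?thesis using x by (simp add: seqs_remove_last in_set_butlastD)
    next
      case False then show ?thesis using x by (simp add: seqs_remove_last)
    qed
    then show "x \<in> placed s" unfolding placed_iff by blast
  qed
qed


lemma INV_non_reducible:
  assumes inv: "INV n m L C s" and m: "m \<ge> 1" and Lpos: "\<forall>\<alpha>\<in>{1..n}. L \<alpha> > 0"
  shows "non_reducible m L C s"
  unfolding non_reducible_def
proof (intro ballI notI)
  fix \<alpha> assume "\<alpha> \<in> last_jobs m s" "reducible_by m L C s \<alpha>"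
  then obtain \<mu>0 \<mu> where h: "\<mu>0 \<in> {1..m}" "seqs s \<mu>0 \<noteq> []" "last (seqs s \<mu>0) = \<alpha>"
     "\<mu> \<in> {1..m}" "\<mu> \<noteq> \<mu>0" "ms m L (ins L C (remove_last s \<mu>0) \<alpha> \<mu>) < ms m L s"
    unfolding reducible_by_def by blast
  define r where "r = remove_last s \<mu>0"
  define s' where "s' = ins L C r \<alpha> \<mu>"
  define t' where "t' = ins_start L C r \<alpha> \<mu>"
  have fin: "finite (placed s)" and sub: "placed s \<subseteq> {1..n}" using inv by (auto simp: INV_def)
  have pr1: "placed s - {\<alpha>} \<subseteq> placed r" and pr2: "placed r \<subseteq> placed s"
    using placed_remove_last[OF h(2)] h(3) unfolding r_def by auto
  have finr: "finite (placed r)" using pr2 fin finite_subset by blast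
  have str: "st r = st s" unfolding r_def remove_last_def by simp
  have seqr: "\<And>\<nu>. \<nu> \<noteq> \<mu>0 \<Longrightarrow> seqs r \<nu> = seqs s \<nu>" unfolding r_def remove_last_def by simp
  have procr: "proc L r \<mu> = proc L s \<mu>" using seqr[OF h(5)] str by (simp add: proc_def ct_def)
  have ap: "\<alpha> \<in> placed s" using last_placed[OF h(2)] h(3) by simp
  have "L \<alpha> > 0" using ap sub Lpos by blast
  obtain s1 where s1: "finite (placed s1)" "\<alpha> \<notin> placed s1"
        "placed s1 \<subseteq> placed s" "\<forall>\<beta>\<in>placed s1. st s \<beta> = st s1 \<beta>"
        "\<forall>\<mu>'\<in>{1..m}. proc L s1 \<mu>0 \<le> proc L s \<mu>'"
        "st s \<alpha> = ins_start L C s1 \<alpha> \<mu>0"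
  proof -
    have "\<forall>\<nu>. seqs s \<nu> \<noteq> [] \<longrightarrow> (\<exists>s1. finite (placed s1) \<and> last (seqs s \<nu>) \<notin> placed s1 \<and>
       placed s1 \<subseteq> placed s \<and> (\<forall>\<beta>\<in>placed s1. st s \<beta> = st s1 \<beta>) \<and>
       (\<forall>\<mu>'\<in>{1..m}. proc L s1 \<nu> \<le> proc L s \<mu>') \<and>
       st s (last (seqs s \<nu>)) = ins_start L C s1 (last (seqs s \<nu>)) \<nu>)"
      using inv unfolding INV_def by (elim conjE)
    then have "\<exists>s1. finite (placed s1) \<and> last (seqs s \<mu>0) \<notin> placed s1 \<and>
       placed s1 \<subseteq> placed s \<and> (\<forall>\<beta>\<in>placed s1. st s \<beta> = st s1 \<beta>) \<and>
       (\<forall>\<mu>'\<in>{1..m}. proc L s1 \<mu>0 \<le> proc L s \<mu>') \<and>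
       st s (last (seqs s \<mu>0)) = ins_start L C s1 (last (seqs s \<mu>0)) \<mu>0"
      using h(2) by blast
    then show ?thesis using that unfolding h(3) by blast
  qed
  have t'sp: "proc L r \<mu> \<le> t' \<and> (\<forall>\<beta>\<in>placed r. C \<alpha> \<beta> \<longrightarrow>
           {t'..<t' + L \<alpha>} \<inter> {st r \<beta>..<ct L r \<beta>} = {})"
    unfolding t'_def by (rule ins_start_spec(1)[OF finr])
  have le: "st s \<alpha> \<le> t'"
    unfolding s1(6)
  proof (rule ins_start_spec(2)[OF s1(1)])
    show "proc L s1 \<mu>0 \<le> t'" using s1(5) h(4) procr t'sp by force
    show "\<forall>\<beta>\<in>placed s1. C \<alpha> \<beta> \<longrightarrow> {t'..<t' + L \<alpha>} \<inter> {st s1 \<beta>..<ct L s1 \<beta>} = {}"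
    proof (intro ballI impI)
      fix \<beta> assume b: "\<beta> \<in> placed s1" "C \<alpha> \<beta>"
      then have "\<beta> \<in> placed r" using pr1 s1(2,3) by blast
      then have "{t'..<t' + L \<alpha>} \<inter> {st r \<beta>..<ct L r \<beta>} = {}" using t'sp b by blast
      moreover have "st r \<beta> = st s1 \<beta>" using str s1(4) b by simp
      ultimately show "{t'..<t' + L \<alpha>} \<inter> {st s1 \<beta>..<ct L s1 \<beta>} = {}" by (simp add: ct_def)
    qed
  qed
  have ps'mu: "proc L s' \<mu> = t' + L \<alpha>"
    unfolding s'_def t'_def by (simp add: proc_def seqs_ins st_ins ct_def)
  have psmu0: "proc L s \<mu>0 = st s \<alpha> + L \<alpha>" using h(2,3) by (simp add: proc_def ct_def)
  have st's: "st s' = (st s)(\<alpha> := t')" unfolding s'_def t'_def st_ins str ..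
  have seqs's: "\<And>\<nu>. \<nu> \<noteq> \<mu>0 \<Longrightarrow> \<nu> \<noteq> \<mu> \<Longrightarrow> seqs s' \<nu> = seqs s \<nu>"
    unfolding s'_def seqs_ins using seqr by simp
  have ms'ge: "\<And>\<nu>. \<nu> \<in> {1..m} \<Longrightarrow> proc L s' \<nu> \<le> ms m L s'"
    unfolding ms_def by simp
  obtain \<nu> where nu: "\<nu> \<in> {1..m}" "ms m L s = proc L s \<nu>"
  proof -
    have "Max (proc L s ` {1..m}) \<in> proc L s ` {1..m}" using m by (intro Max_in) auto
    then show ?thesis using that unfolding ms_def by auto
  qed
  have "proc L s \<nu> \<le> ms m L s'"
  proof -
    have a: "proc L s \<mu>0 \<le> ms m L s'" using psmu0 ps'mu le ms'ge[OF h(4)] by linarith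
    have b: "proc L s \<mu> \<le> ms m L s'" using procr t'sp ms'ge[OF h(4)] ps'mu \<open>L \<alpha> > 0\<close> by linarith
    show ?thesis
    proof (cases "\<nu> = \<mu>0 \<or> \<nu> = \<mu>")
      case True then show ?thesis using a b by auto
    next
      case False
      then have sq: "seqs s' \<nu> = seqs s \<nu>" using seqs's by simp
      show ?thesis
      proof (cases "seqs s \<nu> = []")
        case True
        then have "proc L s \<nu> = proc L s' \<nu>" using sq by (simp add: proc_def)
        then show ?thesis using ms'ge[OF nu(1)] by simp
      next
        case ne: False
        show ?thesis
        proof (cases "last (seqs s \<nu>) = \<alpha>")
          case True
          then have "proc L s \<nu> = proc L s \<mu>0" using ne psmu0 by (simp add: proc_def ct_def)
          then show ?thesis using a by simp
        next
          case False
          then have "proc L s \<nu> = proc L s' \<nu>" using sq ne st's by (simp add: proc_def ct_def)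
          then show ?thesis using ms'ge[OF nu(1)] by simp
        qed
      qed
    qed
  qed
  moreover have "ms m L s' < ms m L s" using h(6) unfolding s'_def r_def .
  ultimately show False using nu(2) by linarith
qed

lemma derive_run_append:
  "derive_run m L C s0 (xs @ ys) = derive_run m L C (derive_run m L C s0 xs) ys"
  by (induction xs arbitrary: s0) auto

lemma placed_derive: "placed (derive_run m L C s0 as) = placed s0 \<union> set as"
  by (induction as arbitrary: s0) (auto simp: placed_ins)

lemma INV_derive:
  assumes "INV n m L C s0" "m \<ge> 1" "\<forall>\<alpha>\<in>{1..n}. L \<alpha> > 0"
    "set as \<subseteq> {1..n}" "distinct as" "set as \<inter> placed s0 = {}"
  shows "INV n m L C (derive_run m L C s0 as)"
  using assms
proof (induction as arbitrary: s0)
  case Nil then show ?case by simp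
next
  case (Cons a as)
  have "INV n m L C (ins L C s0 a (min_machine m L s0))"
    using Cons.prems by (intro INV_step) auto
  then show ?case using Cons.prems by (simp add: Cons.IH placed_ins)
qed

lemma valid_derive:
  assumes "m \<ge> 1" "set as \<subseteq> {1..n}" "distinct as" "set as \<inter> placed s0 = {}"
  shows "\<exists>ys. valid n m L C s0 ys \<and> derive_run m L C s0 as = run L C s0 ys"
  using assms
proof (induction as arbitrary: s0)
  case Nil then show ?case by (intro exI[of _ "[]"]) simp
next
  case (Cons a as)
  let ?mu = "min_machine m L s0"
  have mu: "?mu \<in> {1..m}" using min_machine[OF Cons.prems(1)] by blast
  have "\<exists>ys. valid n m L C (ins L C s0 a ?mu) ys \<and>
     derive_run m L C (ins L C s0 a ?mu) as = run L C (ins L C s0 a ?mu) ys"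
    using Cons.prems by (intro Cons.IH) (auto simp: placed_ins)
  then obtain ys where ys: "valid n m L C (ins L C s0 a ?mu) ys"
     "derive_run m L C (ins L C s0 a ?mu) as = run L C (ins L C s0 a ?mu) ys" by blast
  show ?case
    apply (rule exI[of _ "(a, ?mu) # ys"])
    using ys mu Cons.prems by auto
qed


theorem lemma6:
  fixes n m :: nat and L :: "nat \<Rightarrow> real" and C :: "nat \<Rightarrow> nat \<Rightarrow> bool" and s :: sched
  assumes "m \<ge> 1"
    and "\<forall>\<alpha>\<in>{1..n}. L \<alpha> > 0"
    and "\<forall>\<alpha> \<beta>. C \<alpha> \<beta> = C \<beta> \<alpha>"
    and "\<forall>\<alpha>. \<not> C \<alpha> \<alpha>"
    and "representable n m L C s"
  shows "prime_sched n m L C s"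
proof -
  obtain as where as: "distinct as" "set as \<subseteq> {1..n}" "s = derive_run m L C empty_sched as"
    using assms(5) unfolding representable_def by blast
  have NR: "\<And>xs. distinct xs \<Longrightarrow> set xs \<subseteq> {1..n} \<Longrightarrow> non_reducible m L C (derive_run m L C empty_sched xs)"
  proof -
    fix xs assume xs: "distinct xs" "set xs \<subseteq> {1..n}"
    have "INV n m L C (derive_run m L C empty_sched xs)"
      by (rule INV_derive[OF INV_empty assms(1,2) xs(2,1)]) (simp add: placed_empty)
    then show "non_reducible m L C (derive_run m L C empty_sched xs)"
      by (rule INV_non_reducible[OF _ assms(1,2)])
  qed
  have sz: "size_s s = length as"
    using as by (simp add: size_s_def placed_derive placed_empty distinct_card)
  have "\<forall>d < size_s s. \<exists>r. derived n m L C r s \<and> size_s r = d \<and> non_reducible m L C r"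
  proof (intro allI impI)
    fix d assume d: "d < size_s s"
    define r where "r = derive_run m L C empty_sched (take d as)"
    have dt1: "distinct (take d as)" using as(1) by (rule distinct_take)
    have dt2: "set (take d as) \<subseteq> {1..n}" using as(2) set_take_subset by (rule subset_trans[rotated])
    note dt = dt1 dt2
    have dd1: "distinct (drop d as)" using as(1) by (rule distinct_drop)
    have dd2: "set (drop d as) \<subseteq> {1..n}" using as(2) set_drop_subset by (rule subset_trans[rotated])
    note dd = dd1 dd2
    have pr: "placed r = set (take d as)" unfolding r_def by (simp add: placed_derive placed_empty)
    have sr: "s = derive_run m L C r (drop d as)"
      unfolding r_def as(3) derive_run_append[symmetric] by simp
    have "subsched n m L C r"
      unfolding subsched_def r_def using valid_derive[OF assms(1) dt(2) dt(1)] by (simp add: placed_empty)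
    moreover have "\<exists>ys. valid n m L C r ys \<and> s = run L C r ys"
    proof -
      have "set (drop d as) \<inter> placed r = {}" unfolding pr
        using set_take_disj_set_drop_if_distinct[OF as(1), of d d] by blast
      then show ?thesis using valid_derive[OF assms(1) dd(2) dd(1)] sr by simp
    qed
    moreover have "size_s r = d" unfolding size_s_def pr
      using dt(1) d sz by (simp add: distinct_card)
    moreover have "non_reducible m L C r" unfolding r_def using NR dt by simp
    ultimately have "derived n m L C r s \<and> size_s r = d \<and> non_reducible m L C r"
      unfolding derived_def by (intro conjI) auto
    then show "\<exists>r. derived n m L C r s \<and> size_s r = d \<and> non_reducible m L C r" by (rule exI)
  qed
  moreover have "non_reducible m L C s" using NR as by simp
  ultimately show ?thesis unfolding prime_sched_def by (intro conjI)
qed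

end
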